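(* For every graph $G$ and integer $k$, calling naive-fvs$(G,k,\emptyset)$ returns a feedback vertex set of $G$ of size at most $k$ if $G$ has one, and returns ``NO'' otherwise.
   Context: All graphs are finite, simple and undirected; $d_G(v)$ denotes the degree of $v$ in $G$, $G-S$ denotes deletion of a vertex set $S$, and $G[S]$ the induced subgraph. A feedback vertex set of $G$ is a set $V_-\subseteq V(G)$ such that $G-V_-$ is a forest. Algorithm naive-fvs$(G,k,F)$ (with $k$ an integer and $F\subseteq V(G)$ inducing a forest) returns a set of vertices or ``NO'' as follows (all choices among several candidates are arbitrary; degrees are in the current graph $G$): (0) If $k<0$ return NO; if $V(G)=\emptyset$ return $\emptyset$. (1) If some vertex $v$ has degree less than $2$, return naive-fvs$(G-\{v\},k,F\setminus\{v\})$. (2) If some $v\in V(G)\setminus F$ has two neighbors in the same connected component of $G[F]$, let $X=$ naive-fvs$(G-\{v\},k-1,F)$ and return $X\cup\{v\}$ (NO if $X$ is NO). (3) Pick $v\in V(G)\setminus F$ of maximum degree. (4) If $d(v)=2$: set $X=\emptyset$; while $G$ contains a cycle $C$, take any vertex $x$ of $C$ not in $F$, add $x$ to $X$ and delete $x$ from $G$; then return $X$ if $|X|\le k$, else NO. (5) Let $X=$ naive-fvs$(G-\{v\},k-1,F)$; if $X$ is not NO, return $X\cup\{v\}$. (6) Return naive-fvs$(G,k,F\cup\{v\})$. *)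

theory Defs
  imports Main
begin

type_synonym 'a graph = "'a set \<times> 'a set set"

definition verts :: "'a graph \<Rightarrow> 'a set" where "verts G = fst G"
definition edges :: "'a graph \<Rightarrow> 'a set set" where "edges G = snd G"

definition wf_graph :: "'a graph \<Rightarrow> bool" where
  "wf_graph G \<longleftrightarrow> finite (verts G) \<and>
     (\<forall>e\<in>edges G. \<exists>u v. e = {u, v} \<and> u \<noteq> v \<and> u \<in> verts G \<and> v \<in> verts G)"

definition del :: "'a graph \<Rightarrow> 'a set \<Rightarrow> 'a graph" where
  "del G S = (verts G - S, {e \<in> edges G. e \<inter> S = {}})"

definition induced :: "'a graph \<Rightarrow> 'a set \<Rightarrow> 'a graph" where
  "induced G S = (verts G \<inter> S, {e \<in> edges G. e \<subseteq> S})"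

definition adj :: "'a graph \<Rightarrow> 'a \<Rightarrow> 'a \<Rightarrow> bool" where
  "adj G u v \<longleftrightarrow> {u, v} \<in> edges G"

definition degree :: "'a graph \<Rightarrow> 'a \<Rightarrow> nat" where
  "degree G v = card {u. adj G u v}"

definition is_cycle :: "'a graph \<Rightarrow> 'a list \<Rightarrow> bool" where
  "is_cycle G cs \<longleftrightarrow> length cs \<ge> 3 \<and> distinct cs \<and> set cs \<subseteq> verts G \<and>
     (\<forall>i < length cs. adj G (cs ! i) (cs ! ((i + 1) mod length cs)))"

definition has_cycle :: "'a graph \<Rightarrow> bool" where
  "has_cycle G \<longleftrightarrow> (\<exists>cs. is_cycle G cs)"

definition forest :: "'a graph \<Rightarrow> bool" where
  "forest G \<longleftrightarrow> \<not> has_cycle G"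

definition is_fvs :: "'a graph \<Rightarrow> 'a set \<Rightarrow> bool" where
  "is_fvs G S \<longleftrightarrow> S \<subseteq> verts G \<and> forest (del G S)"

definition same_component :: "'a graph \<Rightarrow> 'a \<Rightarrow> 'a \<Rightarrow> bool" where
  "same_component G u v \<longleftrightarrow> u \<in> verts G \<and> v \<in> verts G \<and> (adj G)\<^sup>*\<^sup>* u v"

definition two_nbrs_same_comp :: "'a graph \<Rightarrow> 'a set \<Rightarrow> 'a \<Rightarrow> bool" where
  "two_nbrs_same_comp G F v \<longleftrightarrow>
     (\<exists>u w. u \<noteq> w \<and> adj G v u \<and> adj G v w \<and> same_component (induced G F) u w)"

text \<open>Step (4): the while loop, as a relation (arbitrary choices of cycle and vertex).
  cycle_break G F X: starting from G, the loop may terminate having collected X.\<close>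
inductive cycle_break :: "'a graph \<Rightarrow> 'a set \<Rightarrow> 'a set \<Rightarrow> bool" where
  stop: "\<not> has_cycle G \<Longrightarrow> cycle_break G F {}"
| step: "is_cycle G cs \<Longrightarrow> x \<in> set cs \<Longrightarrow> x \<notin> F \<Longrightarrow>
         cycle_break (del G {x}) F X \<Longrightarrow> cycle_break G F (insert x X)"

text \<open>naive_fvs G k F R: some run of naive-fvs(G,k,F) (with some resolution of
  the arbitrary choices) returns R; None encodes NO.  The guards encode the
  order of the steps (a later step applies only if earlier ones do not).\<close>
inductive naive_fvs :: "'a graph \<Rightarrow> int \<Rightarrow> 'a set \<Rightarrow> 'a set option \<Rightarrow> bool" where
  s0_neg: "k < 0 \<Longrightarrow> naive_fvs G k F None"
| s0_empty: "k \<ge> 0 \<Longrightarrow> verts G = {} \<Longrightarrow> naive_fvs G k F (Some {})"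
| s1: "k \<ge> 0 \<Longrightarrow> verts G \<noteq> {} \<Longrightarrow> v \<in> verts G \<Longrightarrow> degree G v < 2 \<Longrightarrow>
       naive_fvs (del G {v}) k (F - {v}) R \<Longrightarrow> naive_fvs G k F R"
| s2: "k \<ge> 0 \<Longrightarrow> verts G \<noteq> {} \<Longrightarrow> (\<forall>u\<in>verts G. degree G u \<ge> 2) \<Longrightarrow>
       v \<in> verts G - F \<Longrightarrow> two_nbrs_same_comp G F v \<Longrightarrow>
       naive_fvs (del G {v}) (k - 1) F R \<Longrightarrow> naive_fvs G k F (map_option (insert v) R)"
| s4: "k \<ge> 0 \<Longrightarrow> verts G \<noteq> {} \<Longrightarrow> (\<forall>u\<in>verts G. degree G u \<ge> 2) \<Longrightarrow>
       (\<forall>u\<in>verts G - F. \<not> two_nbrs_same_comp G F u) \<Longrightarrow>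
       v \<in> verts G - F \<Longrightarrow> (\<forall>u\<in>verts G - F. degree G u \<le> degree G v) \<Longrightarrow>
       degree G v = 2 \<Longrightarrow> cycle_break G F X \<Longrightarrow>
       naive_fvs G k F (if int (card X) \<le> k then Some X else None)"
| s5: "k \<ge> 0 \<Longrightarrow> verts G \<noteq> {} \<Longrightarrow> (\<forall>u\<in>verts G. degree G u \<ge> 2) \<Longrightarrow>
       (\<forall>u\<in>verts G - F. \<not> two_nbrs_same_comp G F u) \<Longrightarrow>
       v \<in> verts G - F \<Longrightarrow> (\<forall>u\<in>verts G - F. degree G u \<le> degree G v) \<Longrightarrow>
       degree G v \<noteq> 2 \<Longrightarrow> naive_fvs (del G {v}) (k - 1) F (Some X) \<Longrightarrow>
       naive_fvs G k F (Some (insert v X))"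
| s6: "k \<ge> 0 \<Longrightarrow> verts G \<noteq> {} \<Longrightarrow> (\<forall>u\<in>verts G. degree G u \<ge> 2) \<Longrightarrow>
       (\<forall>u\<in>verts G - F. \<not> two_nbrs_same_comp G F u) \<Longrightarrow>
       v \<in> verts G - F \<Longrightarrow> (\<forall>u\<in>verts G - F. degree G u \<le> degree G v) \<Longrightarrow>
       degree G v \<noteq> 2 \<Longrightarrow> naive_fvs (del G {v}) (k - 1) F None \<Longrightarrow>
       naive_fvs G k (insert v F) R \<Longrightarrow> naive_fvs G k F R"

end

theory Submission
  imports Defs
begin


lemma adj_sym: "adj G u v = adj G v u"
  by (simp add: adj_def insert_commute)

lemma wf_adj: "wf_graph G \<Longrightarrow> adj G u v \<Longrightarrow> u \<in> verts G \<and> v \<in> verts G \<and> u \<noteq> v"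
  unfolding wf_graph_def adj_def by (auto simp: doubleton_eq_iff)

lemma verts_del[simp]: "verts (del G S) = verts G - S" by (simp add: del_def verts_def)
lemma adj_del[simp]: "adj (del G S) u v \<longleftrightarrow> adj G u v \<and> u \<notin> S \<and> v \<notin> S"
  by (auto simp: del_def adj_def edges_def)
lemma verts_induced[simp]: "verts (induced G S) = verts G \<inter> S" by (simp add: induced_def verts_def)
lemma adj_induced[simp]: "adj (induced G S) u v \<longleftrightarrow> adj G u v \<and> u \<in> S \<and> v \<in> S"
  by (auto simp: induced_def adj_def edges_def)

lemma edges_del: "edges (del G S) = {e \<in> edges G. e \<inter> S = {}}" by (simp add: del_def edges_def)
lemma edges_induced: "edges (induced G S) = {e \<in> edges G. e \<subseteq> S}" by (simp add: induced_def edges_def)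

lemma wf_del: assumes "wf_graph G" shows "wf_graph (del G S)"
  unfolding wf_graph_def
proof (intro conjI ballI)
  show "finite (verts (del G S))" using assms by (simp add: wf_graph_def)
  fix e assume "e \<in> edges (del G S)"
  then have e: "e \<in> edges G" "e \<inter> S = {}" by (auto simp: edges_del)
  then obtain u v where "e = {u, v}" "u \<noteq> v" "u \<in> verts G" "v \<in> verts G"
    using assms unfolding wf_graph_def by blast
  then show "\<exists>u v. e = {u, v} \<and> u \<noteq> v \<and> u \<in> verts (del G S) \<and> v \<in> verts (del G S)"
    using e(2) by auto
qed

lemma wf_induced: assumes "wf_graph G" shows "wf_graph (induced G S)"
  unfolding wf_graph_def
proof (intro conjI ballI)
  show "finite (verts (induced G S))" using assms by (simp add: wf_graph_def)
  fix e assume "e \<in> edges (induced G S)"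
  then have e: "e \<in> edges G" "e \<subseteq> S" by (auto simp: edges_induced)
  then obtain u v where "e = {u, v}" "u \<noteq> v" "u \<in> verts G" "v \<in> verts G"
    using assms unfolding wf_graph_def by blast
  then show "\<exists>u v. e = {u, v} \<and> u \<noteq> v \<and> u \<in> verts (induced G S) \<and> v \<in> verts (induced G S)"
    using e(2) by auto
qed

lemma del_del: "del (del G A) B = del G (A \<union> B)"
  by (auto simp: del_def verts_def edges_def)
lemma del_empty: "del G {} = G"
  by (simp add: del_def verts_def edges_def)

lemma finite_nbrs: assumes "wf_graph G" shows "finite {u. adj G u v}"
proof -
  have "{u. adj G u v} \<subseteq> verts G" using wf_adj[OF assms] by auto
  thus ?thesis using assms finite_subset unfolding wf_graph_def by blast
qed

lemma degree_del: "wf_graph G \<Longrightarrow> degree (del G S) v \<le> degree G v"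
  unfolding degree_def by (rule card_mono[OF finite_nbrs]) auto

lemma cycle_mono: "is_cycle H cs \<Longrightarrow> verts H \<subseteq> verts K \<Longrightarrow> (\<And>a b. adj H a b \<Longrightarrow> adj K a b) \<Longrightarrow> is_cycle K cs"
  unfolding is_cycle_def by blast

lemma forest_del_mono: assumes "forest (del G S)" "S \<subseteq> T" shows "forest (del G T)"
proof -
  have "is_cycle (del G S) cs" if "is_cycle (del G T) cs" for cs
    by (rule cycle_mono[OF that]) (use assms(2) in auto)
  thus ?thesis using assms(1) unfolding forest_def has_cycle_def by blast
qed

lemma cyc_adj_next: "is_cycle H cs \<Longrightarrow> Suc i < length cs \<Longrightarrow> adj H (cs!i) (cs!(Suc i))"
  unfolding is_cycle_def by (metis Suc_lessD Suc_eq_plus1 mod_less)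

lemma cyc_adj_last: "is_cycle H cs \<Longrightarrow> adj H (cs!(length cs - 1)) (cs!0)"
  unfolding is_cycle_def
  by (metis One_nat_def Suc_pred diff_less le_trans less_numeral_extra(1) mod_self not_numeral_le_zero zero_less_iff_neq_zero Suc_eq_plus1 linorder_not_le)

lemma cycle_rotate: assumes "is_cycle H cs" shows "is_cycle H (rotate m cs)"
proof -
  let ?n = "length cs"
  have "adj H (rotate m cs ! i) (rotate m cs ! ((i + 1) mod ?n))" if "i < ?n" for i
  proof -
    have n0: "?n > 0" using that by linarith
    have "rotate m cs ! i = cs ! ((m+i) mod ?n)" using nth_rotate that by blast
    moreover have "rotate m cs ! ((i + 1) mod ?n) = cs ! ((m + (i+1) mod ?n) mod ?n)"
      using nth_rotate[of "(i+1) mod ?n" cs m] n0 by simp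
    moreover have "(m + (i+1) mod ?n) mod ?n = ((m+i) mod ?n + 1) mod ?n"
      by (metis add.assoc mod_add_left_eq mod_add_right_eq)
    moreover have "(m+i) mod ?n < ?n" using n0 by simp
    ultimately show ?thesis using assms unfolding is_cycle_def by metis
  qed
  then show ?thesis using assms unfolding is_cycle_def by simp
qed

lemma cycle_rot_hd: assumes "is_cycle H cs" "y \<in> set cs"
  shows "\<exists>cs'. is_cycle H cs' \<and> cs'!0 = y \<and> set cs' = set cs"
proof -
  obtain j where j: "j < length cs" "cs!j = y" using assms(2) by (auto simp: in_set_conv_nth)
  have "rotate j cs ! 0 = y" using nth_rotate[of 0 cs j] j by (cases cs) auto
  then show ?thesis using cycle_rotate[OF assms(1)] by (intro exI[of _ "rotate j cs"]) simp
qed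


definition gpath :: "'a graph \<Rightarrow> 'a list \<Rightarrow> bool" where
  "gpath H p \<longleftrightarrow> p \<noteq> [] \<and> distinct p \<and> set p \<subseteq> verts H \<and>
     (\<forall>i. Suc i < length p \<longrightarrow> adj H (p!i) (p!Suc i))"

lemma rt_sym: "(adj H)\<^sup>*\<^sup>* a b \<Longrightarrow> (adj H)\<^sup>*\<^sup>* b a"
proof (induction rule: rtranclp_induct)
  case (step y z)
  then show ?case by (meson converse_rtranclp_into_rtranclp adj_sym)
qed simp

lemma rt_verts: "(adj H)\<^sup>*\<^sup>* a b \<Longrightarrow> wf_graph H \<Longrightarrow> a \<in> verts H \<Longrightarrow> b \<in> verts H"
proof (induction rule: rtranclp_induct)
  case (step y z)
  then show ?case using wf_adj[of H y z] by blast
qed simp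

lemma rt_gpath:
  assumes "wf_graph H" "a \<in> verts H" "(adj H)\<^sup>*\<^sup>* a b"
  shows "\<exists>p. gpath H p \<and> p!0 = a \<and> last p = b"
  using assms(3)
proof (induction rule: rtranclp_induct)
  case base
  then show ?case using assms(2) by (intro exI[of _ "[a]"]) (simp add: gpath_def)
next
  case (step b c)
  then obtain p where p: "gpath H p" "p!0 = a" "last p = b" by blast
  show ?case
  proof (cases "c \<in> set p")
    case True
    then obtain i where i: "i < length p" "p!i = c" by (auto simp: in_set_conv_nth)
    let ?q = "take (Suc i) p"
    have pp: "p \<noteq> []" "distinct p" "set p \<subseteq> verts H" "\<And>j. Suc j < length p \<Longrightarrow> adj H (p!j) (p!Suc j)"
      using p(1) unfolding gpath_def by blast+
    have lq: "length ?q = Suc i" using i(1) by simp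
    have "adj H (?q!j) (?q!Suc j)" if "Suc j < length ?q" for j
      using that lq pp(4)[of j] i(1) by (simp add: nth_take)
    moreover have "?q \<noteq> []" "distinct ?q" "set ?q \<subseteq> verts H"
      using pp(1,2,3) set_take_subset[of "Suc i" p] by auto
    ultimately have "gpath H ?q" unfolding gpath_def by blast
    moreover have "?q!0 = a" using p(2) by simp
    moreover have "last ?q = c" using i by (subst last_conv_nth) auto
    ultimately show ?thesis by blast
  next
    case False
    let ?q = "p @ [c]"
    have cv: "c \<in> verts H" using wf_adj[OF assms(1) step(2)] by simp
    have "adj H (?q!j) (?q!Suc j)" if "Suc j < length ?q" for j
    proof (cases "Suc j < length p")
      case True
      then show ?thesis using p(1) by (simp add: nth_append gpath_def)
    next
      case False
      then have "j = length p - 1" "p \<noteq> []" using that p(1) by (auto simp: gpath_def)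
      then show ?thesis using step(2) p(3) by (simp add: nth_append last_conv_nth)
    qed
    moreover have "?q \<noteq> []" "distinct ?q" "set ?q \<subseteq> verts H"
      using p(1) False cv unfolding gpath_def by auto
    ultimately have "gpath H ?q" unfolding gpath_def by blast
    moreover have "?q!0 = a" using p(1,2) by (simp add: gpath_def nth_append)
    ultimately show ?thesis by (intro exI[of _ ?q]) simp
  qed
qed

lemma gpath_cycle:
  assumes "gpath H p" "p!0 \<noteq> last p" "c \<notin> set p" "c \<in> verts K" "verts H \<subseteq> verts K"
    "\<And>a b. adj H a b \<Longrightarrow> adj K a b" "adj K c (p!0)" "adj K c (last p)"
  shows "has_cycle K"
proof -
  let ?cs = "c # p"
  have ne: "p \<noteq> []" using assms(1) by (simp add: gpath_def)
  have lp: "length p \<ge> 2"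
  proof (rule ccontr)
    assume "\<not> length p \<ge> 2"
    moreover have "length p \<noteq> 0" using ne by simp
    ultimately have "length p = 1" by linarith
    then show False using assms(2) by (cases p) auto
  qed
  have "adj K (?cs!i) (?cs!((i+1) mod length ?cs))" if "i < length ?cs" for i
  proof -
    have "i = 0 \<or> (\<exists>j. i = Suc j \<and> Suc j < length p) \<or> i = length p" using that by (cases i) auto
    then consider "i = 0" | j where "i = Suc j" "Suc j < length p" | "i = length p"
      by blast
    then show ?thesis
    proof cases
      case 1
      then show ?thesis using lp ne assms(7) by simp
    next
      case 2
      then have "(i+1) mod length ?cs = Suc (Suc j)" by simp
      then show ?thesis using 2 assms(1,6) by (simp add: gpath_def)
    next
      case 3
      then have "?cs!i = last p" using ne by (simp add: last_conv_nth)
      moreover have "(i+1) mod length ?cs = 0" using 3 by simp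
      ultimately show ?thesis using assms(8) by (simp add: adj_sym)
    qed
  qed
  then have "is_cycle K ?cs" using lp assms(1,3,4,5) unfolding is_cycle_def gpath_def by auto
  then show ?thesis unfolding has_cycle_def by blast
qed

lemma cycle_chain:
  assumes "is_cycle H' cs" "\<And>a b. a \<noteq> cs!0 \<Longrightarrow> b \<noteq> cs!0 \<Longrightarrow> adj H' a b \<Longrightarrow> adj H a b"
  shows "1 \<le> i \<Longrightarrow> i < length cs \<Longrightarrow> (adj H)\<^sup>*\<^sup>* (cs!1) (cs!i)"
proof (induction i)
  case 0
  then show ?case by simp
next
  case (Suc i)
  show ?case
  proof (cases "i = 0")
    case True
    then show ?thesis by simp
  next
    case False
    have d: "distinct cs" using assms(1) by (simp add: is_cycle_def)
    have il: "i < length cs" "0 < length cs" using Suc.prems by linarith+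
    have "cs!i \<noteq> cs!0" "cs!Suc i \<noteq> cs!0" using d False Suc.prems il
      by (simp_all add: nth_eq_iff_index_eq)
    then have "adj H (cs!i) (cs!Suc i)" using assms(2) cyc_adj_next[OF assms(1) Suc.prems(2)] by blast
    then show ?thesis using Suc False by (meson less_one not_less rtranclp.rtrancl_into_rtrancl Suc_lessD)
  qed
qed

lemma add_vertex_forest:
  assumes "forest H" "is_cycle H' cs" "\<And>a b. a \<noteq> y \<Longrightarrow> b \<noteq> y \<Longrightarrow> adj H' a b \<Longrightarrow> adj H a b"
    "verts H' - {y} \<subseteq> verts H"
  shows "\<exists>u w. u \<noteq> w \<and> adj H' y u \<and> adj H' y w \<and> u \<in> verts H \<and> w \<in> verts H \<and> (adj H)\<^sup>*\<^sup>* u w"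
proof (cases "y \<in> set cs")
  case False
  have "is_cycle H cs" using assms(2) unfolding is_cycle_def
  proof (intro conjI allI impI)
    show "set cs \<subseteq> verts H" using assms(2,4) False unfolding is_cycle_def by auto
    fix i assume i: "i < length cs"
    have "(i+1) mod length cs < length cs" using i by (intro mod_less_divisor) linarith
    then have "cs!i \<in> set cs" "cs!((i+1) mod length cs) \<in> set cs" using i nth_mem by blast+
    then have "cs!i \<noteq> y" "cs!((i+1) mod length cs) \<noteq> y" using False by auto
    moreover have "adj H' (cs ! i) (cs ! ((i + 1) mod length cs))" using assms(2) i unfolding is_cycle_def by blast
    ultimately show "adj H (cs ! i) (cs ! ((i + 1) mod length cs))" using assms(3) by blast
  qed auto
  then show ?thesis using assms(1) by (auto simp: forest_def has_cycle_def)
next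
  case True
  then obtain c where c: "is_cycle H' c" "c!0 = y" "set c = set cs" using cycle_rot_hd[OF assms(2)] by blast
  let ?n = "length c"
  have n3: "?n \<ge> 3" and d: "distinct c" and sv: "set c \<subseteq> verts H'" using c(1) by (auto simp: is_cycle_def)
  have l: "1 < ?n" "?n - 1 < ?n" "0 < ?n" "?n - 1 \<noteq> 0" "?n - 1 \<noteq> 1" using n3 by auto
  have f1: "c!1 \<noteq> c!(?n - 1)" using nth_eq_iff_index_eq[OF d l(1) l(2)] l(5) by simp
  have f2: "adj H' y (c!1)" using cyc_adj_next[OF c(1), of 0] n3 c(2) by simp
  have f3: "adj H' y (c!(?n-1))" using cyc_adj_last[OF c(1)] c(2) by (simp add: adj_sym)
  have f4: "c!1 \<noteq> c!0" using nth_eq_iff_index_eq[OF d l(1) l(3)] by simp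
  have f5: "c!(?n-1) \<noteq> c!0" using nth_eq_iff_index_eq[OF d l(2) l(3)] l(4) by simp
  have f6: "c!1 \<in> verts H'" "c!(?n-1) \<in> verts H'" using sv l by auto
  have f7: "c!1 \<in> verts H" "c!(?n-1) \<in> verts H" using f4 f5 f6 c(2) assms(4) by auto
  have ch: "\<And>a b. a \<noteq> c!0 \<Longrightarrow> b \<noteq> c!0 \<Longrightarrow> adj H' a b \<Longrightarrow> adj H a b"
    using assms(3) c(2) by blast
  have l2: "1 \<le> ?n - 1" using n3 by linarith
  have f8: "(adj H)\<^sup>*\<^sup>* (c!1) (c!(?n-1))"
    using cycle_chain[OF c(1) ch l2 l(2)] .
  show ?thesis
    by (rule exI[of _ "c!1"], rule exI[of _ "c!(?n-1)"]) (intro conjI f1 f2 f3 f7 f8)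
qed

lemma two_nbrs_deg:
  assumes "wf_graph G" "u \<noteq> w" "adj G v u" "adj G v w"
  shows "2 \<le> degree G v"
proof -
  have "{u, w} \<subseteq> {z. adj G z v}" using assms(3,4) by (auto simp: adj_sym)
  moreover have "card {u, w} = 2" using assms(2) by simp
  ultimately show ?thesis unfolding degree_def by (metis card_mono finite_nbrs[OF assms(1)])
qed



lemma cycle_transfer:
  assumes "is_cycle G cs" "set cs \<subseteq> verts H" "\<And>a b. a \<in> set cs \<Longrightarrow> b \<in> set cs \<Longrightarrow> adj G a b \<Longrightarrow> adj H a b"
  shows "is_cycle H cs"
  unfolding is_cycle_def
proof (intro conjI allI impI)
  show "3 \<le> length cs" "distinct cs" using assms(1) by (auto simp: is_cycle_def)
  show "set cs \<subseteq> verts H" by fact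
  fix i assume i: "i < length cs"
  have "(i+1) mod length cs < length cs" using i by (intro mod_less_divisor) linarith
  then have "cs!i \<in> set cs" "cs!((i+1) mod length cs) \<in> set cs" using i nth_mem by blast+
  moreover have "adj G (cs ! i) (cs ! ((i + 1) mod length cs))" using assms(1) i unfolding is_cycle_def by blast
  ultimately show "adj H (cs ! i) (cs ! ((i + 1) mod length cs))" using assms(3) by blast
qed

lemma two_nbrs_cycle:
  assumes "wf_graph G" "two_nbrs_same_comp G F v" "v \<notin> S" "v \<notin> F" "v \<in> verts G" "S \<inter> F = {}"
  shows "has_cycle (del G S)"
proof -
  obtain u w where uw: "u \<noteq> w" "adj G v u" "adj G v w" "same_component (induced G F) u w"
    using assms(2) unfolding two_nbrs_same_comp_def by blast
  let ?H = "induced G F"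
  have u: "u \<in> verts ?H" "(adj ?H)\<^sup>*\<^sup>* u w" using uw(4) unfolding same_component_def by auto
  have w: "w \<in> verts ?H" using uw(4) unfolding same_component_def by auto
  obtain p where p: "gpath ?H p" "p!0 = u" "last p = w"
    using rt_gpath[OF wf_induced[OF assms(1)] u] by blast
  show ?thesis
  proof (rule gpath_cycle[OF p(1)])
    show "p!0 \<noteq> last p" using p uw by simp
    show "v \<notin> set p" using p(1) assms(4) unfolding gpath_def by auto
    show "v \<in> verts (del G S)" using assms(3,5) by simp
    show "verts ?H \<subseteq> verts (del G S)" using assms(6) by auto
    show "adj (del G S) a b" if "adj ?H a b" for a b using that assms(6) by auto
    show "adj (del G S) v (p!0)" using p(2) uw(2) u(1) assms(3,6) by auto
    show "adj (del G S) v (last p)" using p(3) uw(3) w assms(3,6) by auto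
  qed
qed

lemma cb_sub: "cycle_break G F X \<Longrightarrow> X \<subseteq> verts G \<and> X \<inter> F = {} \<and> finite X"
proof (induction rule: cycle_break.induct)
  case (step G cs x F X)
  then show ?case unfolding is_cycle_def by auto
qed simp

lemma cb_fvs: "cycle_break G F X \<Longrightarrow> forest (del G X)"
proof (induction rule: cycle_break.induct)
  case (stop G F)
  then show ?case by (simp add: forest_def del_empty)
next
  case (step G cs x F X)
  then show ?case by (simp add: del_del)
qed

lemma cb_exists: "wf_graph G \<Longrightarrow> forest (induced G F) \<Longrightarrow> \<exists>X. cycle_break G F X"
proof (induction "card (verts G)" arbitrary: G rule: less_induct)
  case less
  show ?case
  proof (cases "has_cycle G")
    case False
    then show ?thesis using cycle_break.stop by blast
  next
    case True
    then obtain cs where cs: "is_cycle G cs" unfolding has_cycle_def by blast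
    have "\<exists>x\<in>set cs. x \<notin> F"
    proof (rule ccontr)
      assume "\<not> (\<exists>x\<in>set cs. x \<notin> F)"
      then have sF: "set cs \<subseteq> F" by auto
      have "is_cycle (induced G F) cs"
        by (rule cycle_transfer[OF cs]) (use cs sF in \<open>auto simp: is_cycle_def\<close>)
      then show False using less.prems(2) by (auto simp: forest_def has_cycle_def)
    qed
    then obtain x where x: "x \<in> set cs" "x \<notin> F" by blast
    have xv: "x \<in> verts G" using cs x(1) unfolding is_cycle_def by auto
    have fin: "finite (verts G)" using less.prems(1) by (simp add: wf_graph_def)
    have "card (verts (del G {x})) < card (verts G)" using card_Diff1_less[OF fin xv] by simp
    moreover have "forest (induced (del G {x}) F)"
    proof -
      have "is_cycle (induced G F) c" if "is_cycle (induced (del G {x}) F) c" for c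
        by (rule cycle_mono[OF that]) auto
      then show ?thesis using less.prems(2) by (auto simp: forest_def has_cycle_def)
    qed
    ultimately obtain X where "cycle_break (del G {x}) F X"
      using less.hyps wf_del[OF less.prems(1)] by blast
    then show ?thesis using cycle_break.step[OF cs x] by blast
  qed
qed


lemma nbrs2:
  assumes "wf_graph G" "degree G y \<le> 2" "adj G y a" "adj G y b" "a \<noteq> b" "adj G y c"
  shows "c = a \<or> c = b"
proof (rule ccontr)
  assume "\<not> (c = a \<or> c = b)"
  then have "card {a, b, c} = 3" using assms(5) by (auto simp: card_insert_if)
  moreover have "{a, b, c} \<subseteq> {u. adj G u y}" using assms(3,4,6) by (auto simp: adj_sym)
  ultimately have "3 \<le> degree G y" unfolding degree_def by (metis card_mono finite_nbrs[OF assms(1)])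
  then show False using assms(2) by simp
qed

lemma fvs_finite: "wf_graph G \<Longrightarrow> is_fvs G S \<Longrightarrow> finite S"
  unfolding is_fvs_def wf_graph_def using finite_subset by blast

lemma exchange:
  assumes wf: "wf_graph G" and deg: "\<forall>u\<in>verts G - F. degree G u \<le> 2"
    and S: "is_fvs G S" "S \<inter> F = {}" and cs0: "is_cycle G cs0" "x \<in> set cs0" "x \<notin> F"
  shows "\<exists>S'. is_fvs (del G {x}) S' \<and> S' \<inter> F = {} \<and> card S' + 1 \<le> card S"
proof -
  have finS: "finite S" using fvs_finite[OF wf S(1)] .
  have SV: "S \<subseteq> verts G" and fS: "forest (del G S)" using S(1) by (auto simp: is_fvs_def)
  show ?thesis
  proof (cases "x \<in> S")
    case True
    have eq: "del (del G {x}) (S - {x}) = del G S" using True by (simp add: del_del insert_absorb)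
    have "S - {x} \<subseteq> verts (del G {x})" using SV by auto
    moreover have "forest (del (del G {x}) (S - {x}))" unfolding eq by (rule fS)
    ultimately have "is_fvs (del G {x}) (S - {x})" unfolding is_fvs_def by blast
    moreover have "card (S - {x}) + 1 \<le> card S" using card.remove[OF finS True] by linarith
    ultimately show ?thesis using S(2) by blast
  next
    case xS: False
    obtain cs where cs: "is_cycle G cs" "cs!0 = x" "set cs = set cs0"
      using cycle_rot_hd[OF cs0(1,2)] by blast
    let ?n = "length cs"
    let ?T = "insert x S"
    let ?G' = "del G ?T"
    have n3: "?n \<ge> 3" and d: "distinct cs" and sv: "set cs \<subseteq> verts G" using cs(1) by (auto simp: is_cycle_def)
    have csne: "cs \<noteq> []" and n0: "0 < ?n" using n3 by auto
    have wf': "wf_graph ?G'" using wf_del[OF wf] .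
    have fG': "forest ?G'" using forest_del_mono[OF fS] by blast
    have neq0: "cs!i \<noteq> x" if "0 < i" "i < ?n" for i
    proof -
      have "0 < ?n" using that by linarith
      then show ?thesis using nth_eq_iff_index_eq[OF d that(2) \<open>0 < ?n\<close>] that(1) cs(2) by auto
    qed
    have neqij: "cs!i \<noteq> cs!j" if "i < ?n" "j < ?n" "i \<noteq> j" for i j
      using nth_eq_iff_index_eq[OF d that(1,2)] that(3) by auto
    have inV: "cs!i \<in> verts G" if "i < ?n" for i using sv that by auto
    have adjn: "adj G (cs!i) (cs!Suc i)" if "Suc i < ?n" for i using cyc_adj_next[OF cs(1) that] .
    have adjl: "adj G (cs!(?n-1)) x" using cyc_adj_last[OF cs(1)] cs(2) by simp
    have degy: "degree G y \<le> 2" if "y \<in> S" for y using deg that S(2) SV by auto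
    have claim: "\<exists>y\<in>S. \<forall>u w. u \<noteq> w \<longrightarrow> adj G y u \<longrightarrow> adj G y w \<longrightarrow> u \<in> verts ?G' \<longrightarrow>
                   w \<in> verts ?G' \<longrightarrow> \<not> (adj ?G')\<^sup>*\<^sup>* u w"
    proof (cases "cs!1 \<in> S")
      case True
      have a1: "adj G (cs!1) x" using adjn[of 0] n3 cs(2) by (simp add: adj_sym)
      have a2: "adj G (cs!1) (cs!2)" using adjn[of 1] n3 by (simp add: numeral_2_eq_2)
      have ne: "x \<noteq> cs!2" using neq0[of 2] n3 by simp
      show ?thesis
      proof (intro bexI[OF _ True] allI impI)
        fix u w assume uw: "u \<noteq> w" "adj G (cs!1) u" "adj G (cs!1) w" "u \<in> verts ?G'" "w \<in> verts ?G'"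
        have "u = x \<or> u = cs!2" "w = x \<or> w = cs!2"
          using nbrs2[OF wf degy[OF True] a1 a2 ne] uw(2,3) by blast+
        then show "\<not> (adj ?G')\<^sup>*\<^sup>* u w" using uw(1,4,5) by auto
      qed
    next
      case c1: False
      show ?thesis
      proof (cases "cs!(?n-1) \<in> S")
        case True
        have a1: "adj G (cs!(?n-1)) x" using adjl .
        have a2: "adj G (cs!(?n-1)) (cs!(?n-2))" using adjn[of "?n-2"] n3
          by (simp add: adj_sym Suc_diff_Suc numeral_2_eq_2)
        have "0 < ?n - 2" "?n - 2 < ?n" using n3 by linarith+
        then have ne: "x \<noteq> cs!(?n-2)" using neq0[of "?n-2"] by metis
        show ?thesis
        proof (intro bexI[OF _ True] allI impI)
          fix u w assume uw: "u \<noteq> w" "adj G (cs!(?n-1)) u" "adj G (cs!(?n-1)) w" "u \<in> verts ?G'" "w \<in> verts ?G'"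
          have "u = x \<or> u = cs!(?n-2)" "w = x \<or> w = cs!(?n-2)"
            using nbrs2[OF wf degy[OF True] a1 a2 ne] uw(2,3) by blast+
          then show "\<not> (adj ?G')\<^sup>*\<^sup>* u w" using uw(1,4,5) by auto
        qed
      next
        case cn: False
        let ?A = "{z. (adj ?G')\<^sup>*\<^sup>* (cs!1) z}"
        have c1V: "cs!1 \<in> verts ?G'" using inV[of 1] neq0[of 1] n3 c1 by auto
        have memA: "z \<in> verts ?G'" if "z \<in> ?A" for z using rt_verts[of ?G' "cs!1" z] that wf' c1V by auto
        have nA: "cs!(?n-1) \<notin> ?A"
        proof
          assume "cs!(?n-1) \<in> ?A"
          then have r: "(adj ?G')\<^sup>*\<^sup>* (cs!1) (cs!(?n-1))" by simp
          obtain p where p: "gpath ?G' p" "p!0 = cs!1" "last p = cs!(?n-1)"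
            using rt_gpath[OF wf' c1V r] by blast
          have "has_cycle (del G S)"
          proof (rule gpath_cycle[OF p(1)])
            show "p!0 \<noteq> last p" using p(2,3) neqij[of 1 "?n-1"] n3 by simp
            show "x \<notin> set p" using p(1) unfolding gpath_def by auto
            show "x \<in> verts (del G S)" using xS inV[OF n0] cs(2) by auto
            show "verts ?G' \<subseteq> verts (del G S)" by auto
            show "adj (del G S) a b" if "adj ?G' a b" for a b using that by auto
            show "adj (del G S) x (p!0)" using p(2) adjn[of 0] n3 cs(2) xS c1 by simp
            show "adj (del G S) x (last p)" using p(3) adjl xS cn by (simp add: adj_sym)
          qed
          then show False using fS by (simp add: forest_def)
        qed
        let ?I = "{i. 1 \<le> i \<and> i \<le> ?n - 1 \<and> cs!i \<in> ?A}"
        have finI: "finite ?I" by (rule finite_subset[of _ "{..?n}"]) auto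
        have oneI: "1 \<in> ?I" using n3 by simp
        define j where "j = Max ?I"
        have jI: "j \<in> ?I" unfolding j_def using Max_in[OF finI] oneI by blast
        have jmax: "i \<le> j" if "i \<in> ?I" for i unfolding j_def using Max_ge[OF finI that] .
        have jn: "j + 1 \<le> ?n - 1" using jI nA
          by (metis (mono_tags, lifting) Suc_eq_plus1 le_neq_implies_less mem_Collect_eq Suc_leI)
        have j1A: "cs!(j+1) \<notin> ?A"
        proof
          assume "cs!(j+1) \<in> ?A"
          then have "j + 1 \<in> ?I" using jn by simp
          then show False using jmax by fastforce
        qed
        have yS: "cs!(j+1) \<in> S"
        proof (rule ccontr)
          assume "cs!(j+1) \<notin> S"
          moreover have "cs!(j+1) \<noteq> x" using neq0[of "j+1"] jn n3 by simp
          moreover have "cs!j \<in> verts ?G'" using memA jI by blast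
          moreover have "adj G (cs!j) (cs!(j+1))" using adjn[of j] jn n3 by simp
          ultimately have "adj ?G' (cs!j) (cs!(j+1))" by simp
          moreover have "(adj ?G')\<^sup>*\<^sup>* (cs!1) (cs!j)" using jI by simp
          ultimately have "cs!(j+1) \<in> ?A" by (simp add: rtranclp.rtrancl_into_rtrancl)
          then show False using j1A by blast
        qed
        have jn2: "j + 2 \<le> ?n - 1"
        proof -
          have "j + 1 \<noteq> ?n - 1" using yS cn by auto
          then show ?thesis using jn by linarith
        qed
        have j2A: "cs!(j+2) \<notin> ?A"
        proof
          assume "cs!(j+2) \<in> ?A"
          then have "j + 2 \<in> ?I" using jn2 by simp
          then show False using jmax by fastforce
        qed
        have a1: "adj G (cs!(j+1)) (cs!j)" using adjn[of j] jn n3 by (simp add: adj_sym)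
        have a2: "adj G (cs!(j+1)) (cs!(j+2))" using adjn[of "j+1"] jn2 n3 by simp
        have ne: "cs!j \<noteq> cs!(j+2)" using neqij[of j "j+2"] jn2 n3 by simp
        have jA: "cs!j \<in> ?A" using jI by simp
        show ?thesis
        proof (intro bexI[OF _ yS] allI impI)
          fix u w assume uw: "u \<noteq> w" "adj G (cs!(j+1)) u" "adj G (cs!(j+1)) w" "u \<in> verts ?G'" "w \<in> verts ?G'"
          have "u = cs!j \<or> u = cs!(j+2)" "w = cs!j \<or> w = cs!(j+2)"
            using nbrs2[OF wf degy[OF yS] a1 a2 ne] uw(2,3) by blast+
          then consider "u = cs!j" "w = cs!(j+2)" | "u = cs!(j+2)" "w = cs!j" using uw(1) by blast
          then show "\<not> (adj ?G')\<^sup>*\<^sup>* u w"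
          proof cases
            case 1
            show ?thesis
            proof
              assume "(adj ?G')\<^sup>*\<^sup>* u w"
              then have "cs!(j+2) \<in> ?A" using jA 1 by (simp add: rtranclp_trans[of _ "cs!1" "cs!j"])
              then show False using j2A by blast
            qed
          next
            case 2
            show ?thesis
            proof
              assume "(adj ?G')\<^sup>*\<^sup>* u w"
              then have "(adj ?G')\<^sup>*\<^sup>* w u" by (rule rt_sym)
              then have "cs!(j+2) \<in> ?A" using jA 2 by (simp add: rtranclp_trans[of _ "cs!1" "cs!j"])
              then show False using j2A by blast
            qed
          qed
        qed
      qed
    qed
    then obtain y where yS: "y \<in> S" and yc: "\<forall>u w. u \<noteq> w \<longrightarrow> adj G y u \<longrightarrow> adj G y w \<longrightarrow> u \<in> verts ?G' \<longrightarrow>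
                   w \<in> verts ?G' \<longrightarrow> \<not> (adj ?G')\<^sup>*\<^sup>* u w" by blast
    have yx: "y \<noteq> x" using yS xS by blast
    have eq: "del (del G {x}) (S - {y}) = del G (?T - {y})" using yx by (simp add: del_del insert_Diff_if)
    have "forest (del G (?T - {y}))"
    proof (unfold forest_def has_cycle_def, rule notI, elim exE)
      fix c assume c: "is_cycle (del G (?T - {y})) c"
      have "\<exists>u w. u \<noteq> w \<and> adj (del G (?T - {y})) y u \<and> adj (del G (?T - {y})) y w \<and> u \<in> verts ?G' \<and> w \<in> verts ?G' \<and> (adj ?G')\<^sup>*\<^sup>* u w"
        by (rule add_vertex_forest[OF fG' c]) auto
      then show False using yc by auto
    qed
    moreover have "S - {y} \<subseteq> verts (del G {x})" using SV xS by auto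
    ultimately have "is_fvs (del G {x}) (S - {y})" unfolding is_fvs_def eq by blast
    moreover have "card (S - {y}) + 1 \<le> card S" using card.remove[OF finS yS] by linarith
    ultimately show ?thesis using S(2) by blast
  qed
qed


lemma cb_opt:
  "cycle_break G F X \<Longrightarrow> wf_graph G \<Longrightarrow> \<forall>u\<in>verts G - F. degree G u \<le> 2 \<Longrightarrow>
   is_fvs G S \<Longrightarrow> S \<inter> F = {} \<Longrightarrow> card X \<le> card S"
proof (induction arbitrary: S rule: cycle_break.induct)
  case (stop G F)
  then show ?case by simp
next
  case (step G cs x F X)
  obtain S' where S': "is_fvs (del G {x}) S'" "S' \<inter> F = {}" "card S' + 1 \<le> card S"
    using exchange[OF step.prems(1,2,3,4) step.hyps(1,2,3)] by blast
  have deg': "\<forall>u\<in>verts (del G {x}) - F. degree (del G {x}) u \<le> 2"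
  proof
    fix u assume "u \<in> verts (del G {x}) - F"
    then have "u \<in> verts G - F" by simp
    then have "degree G u \<le> 2" using step.prems(2) by blast
    then show "degree (del G {x}) u \<le> 2" using degree_del[OF step.prems(1), of "{x}" u] by linarith
  qed
  have "card X \<le> card S'" using step.IH[OF wf_del[OF step.prems(1)] deg' S'(1,2)] .
  moreover have "x \<notin> X" "finite X" using cb_sub[OF step.hyps(4)] by auto
  ultimately show ?case using S'(3) by simp
qed

lemma min_deg_cycle:
  assumes wf: "wf_graph G" and ne: "verts G \<noteq> {}" and deg: "\<forall>u\<in>verts G. 2 \<le> degree G u"
  shows "has_cycle G"
proof -
  have fin: "finite (verts G)" using wf by (simp add: wf_graph_def)
  obtain v where v: "v \<in> verts G" using ne by blast
  let ?P = "\<lambda>L. \<exists>p. gpath G p \<and> length p = L"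
  have P1: "?P 1" using v by (intro exI[of _ "[v]"]) (simp add: gpath_def)
  have bnd: "\<forall>L. ?P L \<longrightarrow> L \<le> card (verts G)"
  proof (intro allI impI)
    fix L assume "?P L"
    then obtain p where p: "gpath G p" "length p = L" by blast
    then have "card (set p) = L" "set p \<subseteq> verts G" by (auto simp: gpath_def distinct_card)
    then show "L \<le> card (verts G)" using card_mono[OF fin] by metis
  qed
  obtain L where L: "?P L" "\<forall>L'. ?P L' \<longrightarrow> L' \<le> L" using Nat.ex_has_greatest_nat[OF P1 bnd] by blast
  obtain p where p: "gpath G p" "length p = L" using L(1) by blast
  have pne: "p \<noteq> []" and pd: "distinct p" and ps: "set p \<subseteq> verts G"
    and pa: "\<And>i. Suc i < length p \<Longrightarrow> adj G (p!i) (p!Suc i)"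
    using p(1) unfolding gpath_def by blast+
  let ?b = "p!0"
  have bV: "?b \<in> verts G" using ps pne by auto
  have nin: "z \<in> set p" if "adj G z ?b" for z
  proof (rule ccontr)
    assume zn: "z \<notin> set p"
    have zV: "z \<in> verts G" using wf_adj[OF wf that] by simp
    have "gpath G (z # p)" unfolding gpath_def
    proof (intro conjI allI impI)
      show "z # p \<noteq> []" "distinct (z # p)" "set (z # p) \<subseteq> verts G" using zn pd ps zV by auto
      fix i assume i: "Suc i < length (z # p)"
      show "adj G ((z # p) ! i) ((z # p) ! Suc i)"
      proof (cases i)
        case 0
        then show ?thesis using that by simp
      next
        case (Suc i')
        then show ?thesis using pa[of i'] i by simp
      qed
    qed
    then have "?P (Suc L)" using p(2) by (intro exI[of _ "z # p"]) simp
    then show False using L(2) by fastforce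
  qed
  have "2 \<le> card {z. adj G z ?b}" using deg bV unfolding degree_def by blast
  then obtain z where z: "adj G z ?b" "z \<noteq> p!1"
  proof -
    assume r: "\<And>z. adj G z ?b \<Longrightarrow> z \<noteq> p!1 \<Longrightarrow> thesis"
    show thesis
    proof (rule ccontr)
      assume "\<not> thesis"
      then have "{z. adj G z ?b} \<subseteq> {p!1}" using r by blast
      then have "card {z. adj G z ?b} \<le> 1" by (metis card.empty card_insert_disjoint card_mono empty_iff finite.intros(1) finite_insert
           insert_absorb2 le_zero_eq One_nat_def)
      then show False using \<open>2 \<le> card {z. adj G z ?b}\<close> by simp
    qed
  qed
  have zb: "z \<noteq> ?b" using wf_adj[OF wf z(1)] by simp
  obtain j where j: "j < length p" "p!j = z" using nin[OF z(1)] by (auto simp: in_set_conv_nth)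
  have j0: "j \<noteq> 0" using j zb by (metis)
  have j1: "j \<noteq> 1" using j z(2) by auto
  let ?c = "take (Suc j) p"
  have lc: "length ?c = Suc j" using j(1) by simp
  have "is_cycle G ?c" unfolding is_cycle_def
  proof (intro conjI allI impI)
    show "3 \<le> length ?c" using lc j0 j1 by linarith
    show "distinct ?c" using pd by simp
    show "set ?c \<subseteq> verts G" using ps set_take_subset[of "Suc j" p] by blast
    fix i assume i: "i < length ?c"
    show "adj G (?c ! i) (?c ! ((i + 1) mod length ?c))"
    proof (cases "i = j")
      case True
      then have "(i + 1) mod length ?c = 0" using lc by simp
      then show ?thesis using True j z(1) lc by simp
    next
      case False
      then have "i < j" using i lc by linarith
      then have "(i + 1) mod length ?c = Suc i" using lc by simp
      then show ?thesis using pa[of i] \<open>i < j\<close> j(1) by simp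
    qed
  qed
  then show ?thesis unfolding has_cycle_def by blast
qed


lemma forest_mono: "forest K \<Longrightarrow> verts H \<subseteq> verts K \<Longrightarrow> (\<And>a b. adj H a b \<Longrightarrow> adj K a b) \<Longrightarrow> forest H"
  unfolding forest_def has_cycle_def using cycle_mono by blast

lemma fvs_del: assumes "is_fvs G S" shows "is_fvs (del G {v}) (S - {v})"
proof -
  have eq: "del (del G {v}) (S - {v}) = del G (insert v S)" by (simp add: del_del)
  have "forest (del G (insert v S))" using assms forest_del_mono[of G S "insert v S"] by (auto simp: is_fvs_def)
  moreover have "S - {v} \<subseteq> verts (del G {v})" using assms by (auto simp: is_fvs_def)
  ultimately show ?thesis unfolding is_fvs_def eq by blast
qed

lemma fvs_insert: assumes "is_fvs (del G {v}) X" "v \<in> verts G" shows "is_fvs G (insert v X)"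
proof -
  have eq: "del (del G {v}) X = del G (insert v X)" by (simp add: del_del)
  show ?thesis using assms unfolding is_fvs_def eq by auto
qed

lemma sound:
  "naive_fvs G k F R \<Longrightarrow> wf_graph G \<Longrightarrow>
   (case R of None \<Rightarrow> \<not> (\<exists>S. is_fvs G S \<and> S \<inter> F = {} \<and> int (card S) \<le> k)
            | Some X \<Rightarrow> is_fvs G X \<and> X \<inter> F = {} \<and> int (card X) \<le> k)"
proof (induction rule: naive_fvs.induct)
  case (s0_neg k G F)
  then show ?case by simp
next
  case (s0_empty k G F)
  have "\<not> is_cycle G cs" for cs using s0_empty(2) unfolding is_cycle_def by auto
  then have "is_fvs G {}" by (simp add: is_fvs_def del_empty forest_def has_cycle_def)
  then show ?case using s0_empty(1) by simp
next
  case (s1 k G v F R)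
  have wf': "wf_graph (del G {v})" using wf_del[OF s1.prems] .
  have finV: "finite (verts G)" using s1.prems by (simp add: wf_graph_def)
  show ?case
  proof (cases R)
    case None
    then have IH: "\<not> (\<exists>S. is_fvs (del G {v}) S \<and> S \<inter> (F - {v}) = {} \<and> int (card S) \<le> k)"
      using s1.IH[OF wf'] by simp
    show ?thesis unfolding None
    proof (simp only: option.case, intro notI, elim exE conjE)
      fix S assume S: "is_fvs G S" "S \<inter> F = {}" and Sk: "int (card S) \<le> k"
      have fin: "finite S" using fvs_finite[OF s1.prems S(1)] .
      have "card (S - {v}) \<le> card S" by (rule card_Diff1_le)
      moreover have "(S - {v}) \<inter> (F - {v}) = {}" using S(2) by auto
      ultimately have "\<not> int (card (S - {v})) \<le> k" using IH fvs_del[OF S(1), of v] by blast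
      then show False using \<open>card (S - {v}) \<le> card S\<close> Sk by linarith
    qed
  next
    case (Some X)
    then have IH: "is_fvs (del G {v}) X" "X \<inter> (F - {v}) = {}" "int (card X) \<le> k"
      using s1.IH[OF wf'] by simp_all
    have XV: "X \<subseteq> verts G - {v}" using IH(1) by (simp add: is_fvs_def)
    have fH: "forest (del G (insert v X))" using IH(1) unfolding is_fvs_def by (simp add: del_del)
    have "forest (del G X)"
    proof (unfold forest_def has_cycle_def, rule notI, elim exE)
      fix c assume c: "is_cycle (del G X) c"
      have "\<exists>u w. u \<noteq> w \<and> adj (del G X) v u \<and> adj (del G X) v w \<and> u \<in> verts (del G (insert v X)) \<and> w \<in> verts (del G (insert v X)) \<and> (adj (del G (insert v X)))\<^sup>*\<^sup>* u w"
        by (rule add_vertex_forest[OF fH c]) auto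
      then obtain u w where "u \<noteq> w" "adj G v u" "adj G v w" by auto
      then have "2 \<le> degree G v" using two_nbrs_deg[OF s1.prems] by blast
      then show False using s1.hyps(4) by simp
    qed
    then have "is_fvs G X" using XV by (auto simp: is_fvs_def)
    moreover have "X \<inter> F = {}" using IH(2) XV by auto
    ultimately show ?thesis using Some IH(3) by simp
  qed
next
  case (s2 k G v F R)
  have wf': "wf_graph (del G {v})" using wf_del[OF s2.prems] .
  show ?case
  proof (cases R)
    case None
    then have IH: "\<not> (\<exists>S. is_fvs (del G {v}) S \<and> S \<inter> F = {} \<and> int (card S) \<le> k - 1)"
      using s2.IH[OF wf'] by simp
    show ?thesis unfolding None
    proof (simp only: option.case option.map, intro notI, elim exE conjE)
      fix S assume S: "is_fvs G S" "S \<inter> F = {}" and Sk: "int (card S) \<le> k"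
      have fin: "finite S" using fvs_finite[OF s2.prems S(1)] .
      have vS: "v \<in> S"
      proof (rule ccontr)
        assume "v \<notin> S"
        then have "has_cycle (del G S)" using two_nbrs_cycle[OF s2.prems s2.hyps(5)] s2.hyps(4) S(2) by blast
        then show False using S(1) by (simp add: is_fvs_def forest_def)
      qed
      have "card S = Suc (card (S - {v}))" using card.remove[OF fin vS] .
      moreover have "(S - {v}) \<inter> F = {}" using S(2) by auto
      moreover have "\<not> int (card (S - {v})) \<le> k - 1" using IH fvs_del[OF S(1), of v] calculation(2) by blast
      ultimately show False using Sk by linarith
    qed
  next
    case (Some X)
    then have IH: "is_fvs (del G {v}) X" "X \<inter> F = {}" "int (card X) \<le> k - 1"
      using s2.IH[OF wf'] by simp_all
    have fin: "finite X" using fvs_finite[OF wf' IH(1)] .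
    have "card (insert v X) \<le> card X + 1" using fin by (simp add: card_insert_if)
    then show ?thesis using Some IH fvs_insert[OF IH(1)] s2.hyps(4) by auto
  qed
next
  case (s4 k G F v X)
  have X: "X \<subseteq> verts G" "X \<inter> F = {}" "finite X" using cb_sub[OF s4.hyps(8)] by auto
  have fX: "is_fvs G X" using cb_fvs[OF s4.hyps(8)] X(1) by (simp add: is_fvs_def)
  show ?case
  proof (cases "int (card X) \<le> k")
    case True
    then show ?thesis using fX X by simp
  next
    case False
    have deg: "\<forall>u\<in>verts G - F. degree G u \<le> 2" using s4.hyps(6,7) by auto
    have "\<not> (is_fvs G S \<and> S \<inter> F = {} \<and> int (card S) \<le> k)" for S
      using cb_opt[OF s4.hyps(8) s4.prems deg, of S] False by auto
    then show ?thesis using False by simp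
  qed
next
  case (s5 k G F v X)
  have wf': "wf_graph (del G {v})" using wf_del[OF s5.prems] .
  have IH: "is_fvs (del G {v}) X" "X \<inter> F = {}" "int (card X) \<le> k - 1"
    using s5.IH[OF wf'] by simp_all
  have fin: "finite X" using fvs_finite[OF wf' IH(1)] .
  have "card (insert v X) \<le> card X + 1" using fin by (simp add: card_insert_if)
  then show ?case using IH fvs_insert[OF IH(1)] s5.hyps(5) by auto
next
  case (s6 k G F v R)
  have wf': "wf_graph (del G {v})" using wf_del[OF s6.prems] .
  have IH1: "\<not> (\<exists>S. is_fvs (del G {v}) S \<and> S \<inter> F = {} \<and> int (card S) \<le> k - 1)"
    using s6.IH(1)[OF wf'] by simp
  show ?case
  proof (cases R)
    case None
    then have IH2: "\<not> (\<exists>S. is_fvs G S \<and> S \<inter> insert v F = {} \<and> int (card S) \<le> k)"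
      using s6.IH(2)[OF s6.prems] by simp
    show ?thesis unfolding None
    proof (simp only: option.case, intro notI, elim exE conjE)
      fix S assume S: "is_fvs G S" "S \<inter> F = {}" and Sk: "int (card S) \<le> k"
      have fin: "finite S" using fvs_finite[OF s6.prems S(1)] .
      show False
      proof (cases "v \<in> S")
        case True
        have "card S = Suc (card (S - {v}))" using card.remove[OF fin True] .
        moreover have "(S - {v}) \<inter> F = {}" using S(2) by auto
        moreover have "\<not> int (card (S - {v})) \<le> k - 1" using IH1 fvs_del[OF S(1), of v] calculation(2) by blast
        ultimately show ?thesis using Sk by linarith
      next
        case False
        then have "S \<inter> insert v F = {}" using S(2) by auto
        then show ?thesis using IH2 S(1) Sk by blast
      qed
    qed
  next
    case (Some X)
    then show ?thesis using s6.IH(2)[OF s6.prems] by auto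
  qed
qed


lemma exists_run:
  "wf_graph G \<Longrightarrow> F \<subseteq> verts G \<Longrightarrow> forest (induced G F) \<Longrightarrow> \<exists>R. naive_fvs G k F R"
proof (induction "card (verts G) + card (verts G - F)" arbitrary: G F k rule: less_induct)
  case less
  have wf: "wf_graph G" and FV: "F \<subseteq> verts G" and fF: "forest (induced G F)" by fact+
  have fin: "finite (verts G)" using wf by (simp add: wf_graph_def)
  have wf': "wf_graph (del G {v})" for v using wf_del[OF wf] .
  have cardv: "card (verts (del G {v})) < card (verts G)" if "v \<in> verts G" for v
    using card_Diff1_less[OF fin that] by simp
  show ?case
  proof (cases "k < 0")
    case True
    then show ?thesis using naive_fvs.s0_neg by blast
  next
    case False
    then have k0: "k \<ge> 0" by simp
    show ?thesis
    proof (cases "verts G = {}")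
      case True
      then show ?thesis using naive_fvs.s0_empty[OF k0] by blast
    next
      case ne: False
      show ?thesis
      proof (cases "\<exists>v\<in>verts G. degree G v < 2")
        case True
        then obtain v where v: "v \<in> verts G" "degree G v < 2" by blast
        have m: "card (verts (del G {v})) + card (verts (del G {v}) - (F - {v})) < card (verts G) + card (verts G - F)"
        proof -
          have "verts (del G {v}) - (F - {v}) \<subseteq> verts G - F" by auto
          then have "card (verts (del G {v}) - (F - {v})) \<le> card (verts G - F)"
            using fin by (intro card_mono) auto
          then show ?thesis using cardv[OF v(1)] by linarith
        qed
        have "forest (induced (del G {v}) (F - {v}))"
          by (rule forest_mono[OF fF]) auto
        moreover have "F - {v} \<subseteq> verts (del G {v})" using FV by auto
        ultimately obtain R where "naive_fvs (del G {v}) k (F - {v}) R"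
          using less.hyps[OF m wf'] by blast
        then show ?thesis using naive_fvs.s1[OF k0 ne v] by blast
      next
        case False
        then have deg2: "\<forall>u\<in>verts G. 2 \<le> degree G u" by auto
        show ?thesis
        proof (cases "\<exists>v\<in>verts G - F. two_nbrs_same_comp G F v")
          case True
          then obtain v where v: "v \<in> verts G - F" "two_nbrs_same_comp G F v" by blast
          have m: "card (verts (del G {v})) + card (verts (del G {v}) - F) < card (verts G) + card (verts G - F)"
          proof -
            have "verts (del G {v}) - F \<subseteq> verts G - F" by auto
            then have "card (verts (del G {v}) - F) \<le> card (verts G - F)"
              using fin by (intro card_mono) auto
            moreover have "card (verts (del G {v})) < card (verts G)" using cardv[of v] v(1) by blast
            ultimately show ?thesis by linarith
          qed
          have "forest (induced (del G {v}) F)"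
            by (rule forest_mono[OF fF]) auto
          moreover have "F \<subseteq> verts (del G {v})" using FV v(1) by auto
          ultimately obtain R where "naive_fvs (del G {v}) (k - 1) F R"
            using less.hyps[OF m wf'] by blast
          then show ?thesis using naive_fvs.s2[OF k0 ne deg2 v] by blast
        next
          case no2: False
          then have no2': "\<forall>u\<in>verts G - F. \<not> two_nbrs_same_comp G F u" by blast
          have VF: "verts G - F \<noteq> {}"
          proof
            assume "verts G - F = {}"
            then have VsF: "verts G \<subseteq> F" by blast
            obtain c where c: "is_cycle G c" using min_deg_cycle[OF wf ne deg2] unfolding has_cycle_def by blast
            have "is_cycle (induced G F) c"
            proof (rule cycle_mono[OF c])
              show "verts G \<subseteq> verts (induced G F)" using VsF by auto
              fix a b assume "adj G a b"
              then show "adj (induced G F) a b" using wf_adj[OF wf] VsF by auto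
            qed
            then show False using fF by (auto simp: forest_def has_cycle_def)
          qed
          have finVF: "finite (verts G - F)" using fin by simp
          obtain v where v: "v \<in> verts G - F" "\<forall>u\<in>verts G - F. degree G u \<le> degree G v"
          proof -
            let ?m = "Max (degree G ` (verts G - F))"
            have "?m \<in> degree G ` (verts G - F)" using Max_in finVF VF by blast
            then obtain v where "v \<in> verts G - F" "degree G v = ?m" by auto
            moreover have "\<forall>u\<in>verts G - F. degree G u \<le> ?m" using Max_ge finVF by blast
            ultimately show thesis using that by auto
          qed
          show ?thesis
          proof (cases "degree G v = 2")
            case True
            obtain X where "cycle_break G F X" using cb_exists[OF wf fF] by blast
            then show ?thesis using naive_fvs.s4[OF k0 ne deg2 no2' v True] by blast
          next
            case d2: False
            have m: "card (verts (del G {v})) + card (verts (del G {v}) - F) < card (verts G) + card (verts G - F)"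
            proof -
              have "verts (del G {v}) - F \<subseteq> verts G - F" by auto
              then have "card (verts (del G {v}) - F) \<le> card (verts G - F)"
                using fin by (intro card_mono) auto
              moreover have "card (verts (del G {v})) < card (verts G)" using cardv[of v] v(1) by blast
            ultimately show ?thesis by linarith
            qed
            have "forest (induced (del G {v}) F)"
              by (rule forest_mono[OF fF]) auto
            moreover have "F \<subseteq> verts (del G {v})" using FV v(1) by auto
            ultimately obtain R1 where R1: "naive_fvs (del G {v}) (k - 1) F R1"
              using less.hyps[OF m wf'] by blast
            show ?thesis
            proof (cases R1)
              case (Some X)
              then show ?thesis using naive_fvs.s5[OF k0 ne deg2 no2' v d2] R1 by blast
            next
              case None
              have m2: "card (verts G) + card (verts G - insert v F) < card (verts G) + card (verts G - F)"
              proof -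
                have "verts G - insert v F = (verts G - F) - {v}" by auto
                then have "card (verts G - insert v F) < card (verts G - F)"
                  using card_Diff1_less[OF finVF v(1)] by simp
                then show ?thesis by linarith
              qed
              have "forest (induced G (insert v F))"
              proof (unfold forest_def has_cycle_def, rule notI, elim exE)
                fix c assume c: "is_cycle (induced G (insert v F)) c"
                have "\<exists>u w. u \<noteq> w \<and> adj (induced G (insert v F)) v u \<and> adj (induced G (insert v F)) v w \<and>
                   u \<in> verts (induced G F) \<and> w \<in> verts (induced G F) \<and> (adj (induced G F))\<^sup>*\<^sup>* u w"
                  by (rule add_vertex_forest[OF fF c]) auto
                then obtain u w where "u \<noteq> w" "adj G v u" "adj G v w"
                  "same_component (induced G F) u w" unfolding same_component_def by auto
                then have "two_nbrs_same_comp G F v" unfolding two_nbrs_same_comp_def by blast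
                then show False using no2' v(1) by blast
              qed
              moreover have "insert v F \<subseteq> verts G" using FV v(1) by auto
              ultimately obtain R2 where "naive_fvs G k (insert v F) R2"
                using less.hyps[OF m2 wf] by blast
              then show ?thesis using naive_fvs.s6[OF k0 ne deg2 no2' v d2] R1 None by blast
            qed
          qed
        qed
      qed
    qed
  qed
qed

theorem mainTheorem2:
  fixes G :: "'a graph" and k :: int
  assumes "wf_graph G"
  shows "(\<exists>R. naive_fvs G k {} R) \<and>
         (\<forall>R. naive_fvs G k {} R \<longrightarrow>
            (case R of
               None \<Rightarrow> \<not> (\<exists>S. is_fvs G S \<and> int (card S) \<le> k)
             | Some X \<Rightarrow> is_fvs G X \<and> int (card X) \<le> k))"
proof (intro conjI allI impI)
  have "forest (induced G {})" by (auto simp: forest_def has_cycle_def is_cycle_def)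
  then show "\<exists>R. naive_fvs G k {} R" using exists_run[OF assms] by blast
next
  fix R assume "naive_fvs G k {} R"
  from sound[OF this assms] show "case R of
               None \<Rightarrow> \<not> (\<exists>S. is_fvs G S \<and> int (card S) \<le> k)
             | Some X \<Rightarrow> is_fvs G X \<and> int (card X) \<le> k"
    by (cases R) auto
qed

end
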